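(* Let $D$ be a division semialgebra over $\mathbb{Z}_\mathrm{max}$ with finite unit index. Then $D$ is selective: for all $x,y\in D$, either $x+y=x$ or $x+y=y$.
   Context: A (possibly noncommutative) semiring has a commutative associative addition with identity $0$ and an associative multiplication with identity $1$, satisfying both distributive laws; a division semiring is one in which every nonzero element is invertible. $\mathbb{Z}_\mathrm{max}=\mathbb{Z}\cup\{-\infty\}$ is the semifield with addition $\max$ and multiplication ordinary addition. A division semialgebra over a semifield $K$ is a division semiring $D$ with an injective homomorphism from $K$ into the center of $D$. The unit index is $\mathrm{ui}(D/K)=|D^\times/K^\times|$. *)

theory Defs
  imports Main
begin

definition semiring_ax :: "('a \<Rightarrow> 'a \<Rightarrow> 'a) \<Rightarrow> ('a \<Rightarrow> 'a \<Rightarrow> 'a) \<Rightarrow> 'a \<Rightarrow> 'a \<Rightarrow> bool" where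
  "semiring_ax add mul z u \<longleftrightarrow>
     (\<forall>x y w. add (add x y) w = add x (add y w)) \<and>
     (\<forall>x y. add x y = add y x) \<and>
     (\<forall>x. add z x = x) \<and>
     (\<forall>x y w. mul (mul x y) w = mul x (mul y w)) \<and>
     (\<forall>x. mul u x = x \<and> mul x u = x) \<and>
     (\<forall>x y w. mul x (add y w) = add (mul x y) (mul x w)) \<and>
     (\<forall>x y w. mul (add x y) w = add (mul x w) (mul y w))"

definition units_of_sr :: "('a \<Rightarrow> 'a \<Rightarrow> 'a) \<Rightarrow> 'a \<Rightarrow> 'a set" where
  "units_of_sr mul u = {x. \<exists>y. mul x y = u \<and> mul y x = u}"

definition division_semiring :: "('a \<Rightarrow> 'a \<Rightarrow> 'a) \<Rightarrow> ('a \<Rightarrow> 'a \<Rightarrow> 'a) \<Rightarrow> 'a \<Rightarrow> 'a \<Rightarrow> bool" where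
  "division_semiring add mul z u \<longleftrightarrow> semiring_ax add mul z u \<and>
     (\<forall>x. x \<noteq> z \<longrightarrow> x \<in> units_of_sr mul u)"

datatype zmax = NegInf | Fin int

fun zmax_add :: "zmax \<Rightarrow> zmax \<Rightarrow> zmax" where
  "zmax_add NegInf y = y"
| "zmax_add x NegInf = x"
| "zmax_add (Fin a) (Fin b) = Fin (max a b)"

fun zmax_mul :: "zmax \<Rightarrow> zmax \<Rightarrow> zmax" where
  "zmax_mul (Fin a) (Fin b) = Fin (a + b)"
| "zmax_mul _ _ = NegInf"

definition zmax_zero :: zmax where "zmax_zero = NegInf"
definition zmax_one :: zmax where "zmax_one = Fin 0"

definition division_semialgebra_zmax ::
  "('a \<Rightarrow> 'a \<Rightarrow> 'a) \<Rightarrow> ('a \<Rightarrow> 'a \<Rightarrow> 'a) \<Rightarrow> 'a \<Rightarrow> 'a \<Rightarrow> (zmax \<Rightarrow> 'a) \<Rightarrow> bool" where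
  "division_semialgebra_zmax add mul z u phi \<longleftrightarrow>
     division_semiring add mul z u \<and>
     (\<forall>a b. phi (zmax_add a b) = add (phi a) (phi b)) \<and>
     (\<forall>a b. phi (zmax_mul a b) = mul (phi a) (phi b)) \<and>
     phi zmax_zero = z \<and> phi zmax_one = u \<and>
     inj phi \<and>
     (\<forall>a x. mul (phi a) x = mul x (phi a))"

text \<open>The quotient D^x / K^x, as the set of cosets x * phi(K^x), K^x = Z_max - {-\<infinity>}.\<close>
definition unit_cosets ::
  "('a \<Rightarrow> 'a \<Rightarrow> 'a) \<Rightarrow> 'a \<Rightarrow> (zmax \<Rightarrow> 'a) \<Rightarrow> 'a set set" where
  "unit_cosets mul u phi =
     (\<lambda>x. (\<lambda>k. mul x (phi k)) ` {k. k \<noteq> zmax_zero}) ` units_of_sr mul u"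

definition unit_index :: "('a \<Rightarrow> 'a \<Rightarrow> 'a) \<Rightarrow> 'a \<Rightarrow> (zmax \<Rightarrow> 'a) \<Rightarrow> nat" where
  "unit_index mul u phi = card (unit_cosets mul u phi)"

definition finite_unit_index :: "('a \<Rightarrow> 'a \<Rightarrow> 'a) \<Rightarrow> 'a \<Rightarrow> (zmax \<Rightarrow> 'a) \<Rightarrow> bool" where
  "finite_unit_index mul u phi \<longleftrightarrow> finite (unit_cosets mul u phi)"

definition selective :: "('a \<Rightarrow> 'a \<Rightarrow> 'a) \<Rightarrow> bool" where
  "selective add \<longleftrightarrow> (\<forall>x y. add x y = x \<or> add x y = y)"

end

theory Submission
  imports Defs
begin

locale idsr =
  fixes add :: "'a \<Rightarrow> 'a \<Rightarrow> 'a" (infixl "\<oplus>" 65)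
    and mul :: "'a \<Rightarrow> 'a \<Rightarrow> 'a" (infixl "\<otimes>" 70)
    and z u :: 'a
  assumes aA: "(x \<oplus> y) \<oplus> w = x \<oplus> (y \<oplus> w)"
    and aC: "x \<oplus> y = y \<oplus> x"
    and aZ: "z \<oplus> x = x"
    and mA: "(x \<otimes> y) \<otimes> w = x \<otimes> (y \<otimes> w)"
    and mL: "u \<otimes> x = x" and mR: "x \<otimes> u = x"
    and dL: "x \<otimes> (y \<oplus> w) = x \<otimes> y \<oplus> x \<otimes> w"
    and dR: "(x \<oplus> y) \<otimes> w = x \<otimes> w \<oplus> y \<otimes> w"
    and idem1: "u \<oplus> u = u" and zu: "z \<noteq> u"
    and dv: "x \<noteq> z \<Longrightarrow> \<exists>y. x \<otimes> y = u \<and> y \<otimes> x = u"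
begin

lemma aLC: "x \<oplus> (y \<oplus> w) = y \<oplus> (x \<oplus> w)"
  by (metis aA aC)

lemma idem: "x \<oplus> x = x"
  by (metis dL idem1 mR)

lemma le_trans': "a \<oplus> b = b \<Longrightarrow> b \<oplus> c = c \<Longrightarrow> a \<oplus> c = c"
  by (metis aA)

lemma monoL: "a \<oplus> b = b \<Longrightarrow> c \<otimes> a \<oplus> c \<otimes> b = c \<otimes> b"
  by (metis dL)

lemma monoR: "a \<oplus> b = b \<Longrightarrow> a \<otimes> c \<oplus> b \<otimes> c = b \<otimes> c"
  by (metis dR)

definition pw :: "'a \<Rightarrow> nat \<Rightarrow> 'a" where
  "pw a k = (((\<otimes>) a) ^^ k) u"

lemma pw_0[simp]: "pw a 0 = u" by (simp add: pw_def)
lemma pw_Suc: "pw a (Suc k) = a \<otimes> pw a k" by (simp add: pw_def)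

lemma pw_add: "pw a (i + j) = pw a i \<otimes> pw a j"
  by (induct i) (simp_all add: pw_Suc mL mA)

lemma pw_Suc': "pw a (Suc k) = pw a k \<otimes> a"
  using pw_add[of a k 1] by (simp add: pw_Suc mR)

lemma pw_inv: "b \<otimes> a = u \<Longrightarrow> pw b k \<otimes> pw a k = u"
proof (induct k)
  case 0 then show ?case by (simp add: mL)
next
  case (Suc k)
  have "pw b (Suc k) \<otimes> pw a (Suc k) = pw b k \<otimes> (b \<otimes> a) \<otimes> pw a k"
    unfolding pw_Suc'[of b] pw_Suc[of a] by (simp add: mA)
  also have "\<dots> = u" using Suc by (simp add: mR)
  finally show ?case .
qed

lemma one_plus_nz: "u \<oplus> a \<noteq> z"
proof
  assume h: "u \<oplus> a = z"
  have "u \<oplus> (u \<oplus> a) = u \<oplus> a" by (simp add: aA[symmetric] idem1)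
  then have "u \<oplus> z = z" using h by simp
  then show False using zu aZ aC by metis
qed

lemma cancel: "p \<otimes> q = p \<Longrightarrow> p' \<otimes> p = u \<Longrightarrow> q = u"
  by (metis mA mL)

lemma pw_ge1: "u \<oplus> q = q \<Longrightarrow> u \<oplus> pw q k = pw q k"
proof (induct k)
  case 0 then show ?case by (simp add: idem1)
next
  case (Suc k)
  have "q \<otimes> u \<oplus> q \<otimes> pw q k = q \<otimes> pw q k" using monoL Suc by blast
  then have "q \<oplus> pw q (Suc k) = pw q (Suc k)" by (simp add: mR pw_Suc)
  then show ?case using le_trans' Suc(2) by blast
qed

lemma pw_expand:
  "pw (u \<oplus> a) (Suc k) = pw (u \<oplus> a) k \<oplus> pw a (Suc k)"
proof (induct k)
  case 0 then show ?case by (simp add: pw_Suc mR)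
next
  case (Suc k)
  define q where "q = u \<oplus> a"
  have IH: "pw q (Suc k) = pw q k \<oplus> pw a (Suc k)" using Suc q_def by simp
  have aq: "a \<oplus> q = q" unfolding q_def by (metis aLC idem)
  have Y: "a \<otimes> pw q k \<oplus> pw q (Suc k) = pw q (Suc k)"
    using monoR[OF aq, of "pw q k"] by (simp add: pw_Suc)
  have "pw q (Suc (Suc k)) = (u \<oplus> a) \<otimes> (pw q k \<oplus> pw a (Suc k))"
    using IH by (simp add: pw_Suc q_def)
  also have "\<dots> = (pw q k \<oplus> pw a (Suc k)) \<oplus> (a \<otimes> pw q k \<oplus> pw a (Suc (Suc k)))"
    by (simp add: dR dL mL pw_Suc aA aLC)
  also have "\<dots> = pw q (Suc k) \<oplus> (a \<otimes> pw q k \<oplus> pw a (Suc (Suc k)))"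
    using IH by simp
  also have "\<dots> = (a \<otimes> pw q k \<oplus> pw q (Suc k)) \<oplus> pw a (Suc (Suc k))"
    by (metis aA aC)
  also have "\<dots> = pw q (Suc k) \<oplus> pw a (Suc (Suc k))" using Y by simp
  finally show ?case unfolding q_def .
qed

lemma L:
  assumes m: "m \<ge> 1" and h: "pw a m \<oplus> u = u"
  shows "a \<oplus> u = u"
proof -
  define q where "q = u \<oplus> a"
  obtain k where mk: "m = Suc k" using m by (cases m) auto
  have uq: "u \<oplus> q = q" unfolding q_def by (simp add: aA[symmetric] idem1)
  have e: "pw q m = pw q k \<oplus> pw a m" using pw_expand mk q_def by simp
  have "pw a m \<oplus> pw q k = pw q k"
    using le_trans'[OF h pw_ge1[OF uq]] .
  then have "pw q m = pw q k" using e aC by metis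
  then have "pw q k \<otimes> q = pw q k" using pw_Suc' mk by simp
  moreover obtain q' where "q \<otimes> q' = u" "q' \<otimes> q = u"
    using dv one_plus_nz q_def by blast
  ultimately have "q = u" using cancel pw_inv by blast
  then show ?thesis using q_def aC by metis
qed

lemma comparable:
  assumes w: "w \<otimes> w' = u" "w' \<otimes> w = u" and m: "m \<ge> 1"
    and c: "pw w m \<oplus> u = u \<or> u \<oplus> pw w m = pw w m"
  shows "u \<oplus> w = u \<or> u \<oplus> w = w"
  using c
proof
  assume "pw w m \<oplus> u = u"
  then show ?thesis using L[OF m] aC by metis
next
  assume h: "u \<oplus> pw w m = pw w m"
  have "pw w' m \<otimes> u \<oplus> pw w' m \<otimes> pw w m = pw w' m \<otimes> pw w m"
    using monoL[OF h] .
  then have "pw w' m \<oplus> u = u" using pw_inv[OF w(2)] by (simp add: mR)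
  then have "w' \<oplus> u = u" using L[OF m] by blast
  then have "w \<otimes> w' \<oplus> w \<otimes> u = w \<otimes> u" using monoL by blast
  then show ?thesis using w by (simp add: mR)
qed

lemma selective_from:
  assumes H: "\<And>w w'. w \<otimes> w' = u \<Longrightarrow> w' \<otimes> w = u \<Longrightarrow> u \<oplus> w = u \<or> u \<oplus> w = w"
  shows "x \<oplus> y = x \<or> x \<oplus> y = y"
proof (cases "x = z")
  case True then show ?thesis by (simp add: aZ)
next
  case xz: False
  show ?thesis
  proof (cases "y = z")
    case True then show ?thesis using aZ aC by metis
  next
    case yz: False
    obtain x' where x': "x \<otimes> x' = u" "x' \<otimes> x = u" using dv xz by blast
    define w where "w = x' \<otimes> y"
    have xw: "x \<otimes> w = y" unfolding w_def by (metis mA mL x'(1))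
    obtain y' where y': "y \<otimes> y' = u" "y' \<otimes> y = u" using dv yz by blast
    have wi1: "w \<otimes> (y' \<otimes> x) = u" unfolding w_def
      by (metis mA mL x'(2) y'(1))
    have wi2: "(y' \<otimes> x) \<otimes> w = u" unfolding w_def
      by (metis mA mL x'(1) y'(2))
    have "x \<oplus> y = x \<otimes> (u \<oplus> w)" using xw by (simp add: dL mR)
    then show ?thesis using H[OF wi1 wi2] xw by (metis mR)
  qed
qed

end

theorem mainTheorem15:
  fixes add mul :: "'a \<Rightarrow> 'a \<Rightarrow> 'a" and z u :: 'a and phi :: "zmax \<Rightarrow> 'a"
  assumes "division_semialgebra_zmax add mul z u phi"
    and "finite_unit_index mul u phi"
  shows "selective add"
proof -
  have sr: "semiring_ax add mul z u" and dvs: "\<forall>x. x \<noteq> z \<longrightarrow> x \<in> units_of_sr mul u"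
    and padd: "\<And>a b. phi (zmax_add a b) = add (phi a) (phi b)"
    and pz: "phi NegInf = z" and pu: "phi (Fin 0) = u" and injp: "inj phi"
    using assms(1) unfolding division_semialgebra_zmax_def division_semiring_def
      zmax_zero_def zmax_one_def by auto
  have fin: "finite (unit_cosets mul u phi)" using assms(2) unfolding finite_unit_index_def by simp
  have uu: "add u u = u" using padd[of "Fin 0" "Fin 0"] pu by simp
  have zu: "z \<noteq> u" using injp pz pu by (metis injD zmax.distinct(1))
  interpret I: idsr add mul z u
    apply unfold_locales
    using sr uu zu dvs unfolding semiring_ax_def units_of_sr_def by auto
  have key: "\<exists>m\<ge>1. \<exists>n. I.pw w m = phi (Fin n)"
    if w: "mul w w' = u" "mul w' w = u" for w w'
  proof -
    define f where "f k = (\<lambda>k'. mul (I.pw w k) (phi k')) ` {k'. k' \<noteq> zmax_zero}" for k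
    have "range f \<subseteq> unit_cosets mul u phi"
    proof
      fix c assume "c \<in> range f"
      then obtain k where c: "c = f k" by auto
      have "I.pw w k \<in> units_of_sr mul u"
        unfolding units_of_sr_def using I.pw_inv w by blast
      then show "c \<in> unit_cosets mul u phi" unfolding c f_def unit_cosets_def by blast
    qed
    then have "finite (range f)" using fin finite_subset by blast
    then have "\<not> inj f" using finite_imageD by blast
    then obtain i j where ij: "i \<noteq> j" "f i = f j" unfolding inj_def by blast
    obtain i j where ij: "i < j" "f i = f j"
    proof (cases "i < j")
      case True then show ?thesis using ij that by blast
    next
      case False then show ?thesis using ij that[of j i] by auto
    qed
    have "I.pw w j \<in> f j" unfolding f_def zmax_zero_def
      using pu I.mR by (metis (mono_tags, lifting) image_eqI mem_Collect_eq zmax.distinct(1))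
    then have "I.pw w j \<in> f i" using ij by simp
    then obtain k' where k': "k' \<noteq> NegInf" "I.pw w j = mul (I.pw w i) (phi k')"
      unfolding f_def zmax_zero_def by auto
    then obtain n where kn: "k' = Fin n" by (cases k') auto
    define m where "m = j - i"
    have m1: "m \<ge> 1" using ij m_def by simp
    have "I.pw w j = mul (I.pw w i) (I.pw w m)" using I.pw_add[of w i m] m_def ij by simp
    then have "mul (I.pw w i) (I.pw w m) = mul (I.pw w i) (phi (Fin n))" using k' kn by simp
    then have "mul (I.pw w' i) (mul (I.pw w i) (I.pw w m))
             = mul (I.pw w' i) (mul (I.pw w i) (phi (Fin n)))" by simp
    then have "I.pw w m = phi (Fin n)" using I.pw_inv[OF w(2), of i] by (simp add: I.mA[symmetric] I.mL)
    then show ?thesis using m1 by blast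
  qed
  have H: "add u w = u \<or> add u w = w" if w: "mul w w' = u" "mul w' w = u" for w w'
  proof -
    obtain m n where m: "m \<ge> 1" "I.pw w m = phi (Fin n)" using key[OF w] by blast
    have c: "add (I.pw w m) u = u \<or> add u (I.pw w m) = I.pw w m"
    proof (cases "n \<le> 0")
      case True
      then have "add (phi (Fin n)) (phi (Fin 0)) = phi (Fin 0)" using padd[of "Fin n" "Fin 0"] by simp
      then show ?thesis using m pu by simp
    next
      case False
      then have "add (phi (Fin 0)) (phi (Fin n)) = phi (Fin n)" using padd[of "Fin 0" "Fin n"] by simp
      then show ?thesis using m pu by simp
    qed
    show ?thesis using I.comparable[OF w m(1) c] .
  qed
  show ?thesis unfolding selective_def using I.selective_from H by blast
qed

end
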